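(* Let $X\subseteq\Omega$ be club in $\Omega$ with $0\notin X$, $\Theta=\Theta_X$. Let $\alpha=\Omega\tilde\alpha$ (a multiple of $\Omega$) and $\beta<\Omega$. If $\alpha+\beta\in\hat\varepsilon_{\Omega+1}$, $\alpha+\beta$ is a limit ordinal, $\alpha+\beta\notin\mathrm{FIX}(X)$, and $(\beta_n)_{n<\omega}$ is a strictly increasing sequence with supremum $\beta$, then $(\Theta(\alpha+\beta_n))_{n<\omega}$ is strictly increasing with supremum $\Theta(\alpha+\beta)$.
   Context: $\Omega$ is the first uncountable ordinal; $\varepsilon_{\Omega+1}$ the least $\varepsilon>\Omega$ with $\omega^\varepsilon=\varepsilon$. Every $0<\xi<\varepsilon_{\Omega+1}$ has a unique $\Omega$-normal form $\xi=\Omega^{\alpha}\beta+\gamma$ with $0<\beta<\Omega$, $\gamma<\Omega^{\alpha}$. $C(0)=\{0\}$, $C(\Omega^\alpha\beta+\gamma)=C(\alpha)\cup C(\gamma)\cup\{\beta\}$; $\xi^*=\max C(\xi)$. For $\theta<\Omega$: $0[\theta]=1[\theta]=0$; $(\Omega^\alpha\beta+\gamma)[\theta]=\Omega^\alpha\beta+\gamma[\theta]$ if $\gamma>0$; $(\Omega^\alpha\beta)[\theta]=\Omega^\alpha\theta$ if $\beta$ is a limit; $\Omega^{\alpha+1}[\theta]=\Omega^\alpha\theta$; $(\Omega^\alpha(\beta+1))[\theta]=\Omega^\alpha\beta+(\Omega^\alpha)[\theta]$ if $\beta>0$; $\Omega^\alpha[\theta]=\Omega^{\alpha[\theta]}$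 if $\alpha$ is a limit. $\tau(0)=0$, $\tau(\zeta+1)=1$, $\tau(\Omega^\alpha\beta+\gamma)=\tau(\gamma)$ if $\gamma>0$, $\tau(\Omega^\alpha\beta)=\beta$ if $\beta$ limit, $\tau(\Omega^\alpha(\beta+1))=\tau(\alpha)$ if $\alpha$ limit, $\tau(\Omega^{\alpha+1}(\beta+1))=\Omega$. $\Theta_X(\xi)$ is the least $\theta\in X$ with $\theta>\xi^*$ such that all $\zeta<\xi$ with $\zeta^*<\theta$ have $\Theta_X(\zeta)<\theta$. $\Omega_0=1$, $\Omega_{n+1}=\Omega^{\Omega_n}$, $\Theta_X(\varepsilon_{\Omega+1})=\sup_n\Theta_X(\Omega_n)$, $\hat\varepsilon_{\Omega+1}=\{\xi<\varepsilon_{\Omega+1}:\xi^*<\Theta_X(\varepsilon_{\Omega+1})\}$. $\mathrm{FIX}(X)$ is the set of $\xi<\varepsilon_{\Omega+1}$ with $(\xi[1])^*<\xi^*=\tau(\xi)=\Theta_X(\gamma)$ for some $\gamma>\xi$. *)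

theory Defs
  imports Main "HOL-Library.Countable_Set"
begin

text \<open>The countable ordinals (the elements of Omega) are modelled by an arbitrary
well-ordered type 'w which is uncountable but all of whose proper initial segments
are countable (these assumptions appear in the theorem); any such well-order has
order type omega_1.\<close>

definition w0 :: "'w::wellorder" where "w0 = (LEAST x. True)"
definition wsuc :: "'w::wellorder \<Rightarrow> 'w" where "wsuc x = (LEAST y. x < y)"
definition w1 :: "'w::wellorder" where "w1 = wsuc w0"
definition wis_succ :: "'w::wellorder \<Rightarrow> bool" where "wis_succ x = (\<exists>y. x = wsuc y)"
definition wpred :: "'w::wellorder \<Rightarrow> 'w" where "wpred x = (THE y. x = wsuc y)"
definition wlim :: "'w::wellorder \<Rightarrow> bool" where "wlim x = (x \<noteq> w0 \<and> \<not> wis_succ x)"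

definition club :: "'w::wellorder set \<Rightarrow> bool" where
  "club X = ((\<forall>a. \<exists>x\<in>X. a < x) \<and>
             (\<forall>l. l \<noteq> w0 \<and> (\<forall>g<l. \<exists>x\<in>X. g < x \<and> x < l) \<longrightarrow> l \<in> X))"

text \<open>Plus a b c denotes Omega^a * b + c.\<close>
datatype 'w tm = Z | Plus "'w tm" 'w "'w tm"

fun tless :: "'w::linorder tm \<Rightarrow> 'w tm \<Rightarrow> bool" where
  "tless Z Z = False"
| "tless Z (Plus _ _ _) = True"
| "tless (Plus _ _ _) Z = False"
| "tless (Plus a b c) (Plus a' b' c') =
     (tless a a' \<or> (a = a' \<and> (b < b' \<or> (b = b' \<and> tless c c'))))"

text \<open>Normal form: 0 < b < Omega and c < Omega^a.\<close>
fun nf :: "'w::wellorder tm \<Rightarrow> bool" where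
  "nf Z = True"
| "nf (Plus a b c) = (nf a \<and> nf c \<and> b \<noteq> w0 \<and>
     (case c of Z \<Rightarrow> True | Plus a' _ _ \<Rightarrow> tless a' a))"

text \<open>Omega^a * t for t < Omega.\<close>
definition mk :: "'w::wellorder tm \<Rightarrow> 'w \<Rightarrow> 'w tm" where
  "mk a t = (if t = w0 then Z else Plus a t Z)"

fun tsuc :: "'w::wellorder tm \<Rightarrow> 'w tm" where
  "tsuc Z = Plus Z w1 Z"
| "tsuc (Plus a b c) = (if c = Z then (if a = Z then Plus Z (wsuc b) Z else Plus a b (Plus Z w1 Z))
                        else Plus a b (tsuc c))"

definition tis_succ :: "'w::wellorder tm \<Rightarrow> bool" where
  "tis_succ x = (\<exists>z. nf z \<and> x = tsuc z)"
definition tpred :: "'w::wellorder tm \<Rightarrow> 'w tm" where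
  "tpred x = (THE z. nf z \<and> x = tsuc z)"
definition tlim :: "'w::wellorder tm \<Rightarrow> bool" where
  "tlim x = (x \<noteq> Z \<and> \<not> tis_succ x)"

text \<open>Ordinal addition alpha + beta for beta < Omega, alpha a multiple of Omega.\<close>
fun omega_mult :: "'w::wellorder tm \<Rightarrow> bool" where
  "omega_mult Z = True"
| "omega_mult (Plus a b c) = (if c = Z then a \<noteq> Z else omega_mult c)"

fun addc :: "'w::wellorder tm \<Rightarrow> 'w \<Rightarrow> 'w tm" where
  "addc Z t = mk Z t"
| "addc (Plus a b c) t = Plus a b (addc c t)"

fun Cset :: "'w::wellorder tm \<Rightarrow> 'w set" where
  "Cset Z = {w0}"
| "Cset (Plus a b c) = Cset a \<union> Cset c \<union> {b}"

definition star :: "'w::wellorder tm \<Rightarrow> 'w" where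
  "star x = Max (Cset x)"

text \<open>fs x t is x[t].  In the case Omega^a (the coefficient is 1) the rules
  1[t] = 0, Omega^(a+1)[t] = Omega^a t and Omega^a[t] = Omega^(a[t]) (a limit) are
  applied; the rule for Omega^a (b+1), b > 0, is Omega^a b + (Omega^a)[t].\<close>
fun fs :: "'w::wellorder tm \<Rightarrow> 'w \<Rightarrow> 'w tm" where
  "fs Z t = Z"
| "fs (Plus a b c) t =
    (let pw = (if a = Z then Z else if tis_succ a then mk (tpred a) t else Plus (fs a t) w1 Z)
     in if c \<noteq> Z then Plus a b (fs c t)
        else if wlim b then mk a t
        else if b = w1 then pw
        else Plus a (wpred b) pw)"

text \<open>tau with values in Omega + 1; None represents Omega.\<close>
fun tau :: "'w::wellorder tm \<Rightarrow> 'w option" where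
  "tau Z = Some w0"
| "tau (Plus a b c) =
    (if c \<noteq> Z then tau c
     else if wlim b then Some b
     else if a = Z then Some w1
     else if tis_succ a then None
     else tau a)"

definition tlessR :: "('w::wellorder tm \<times> 'w tm) set" where
  "tlessR = {(z, x). nf z \<and> nf x \<and> tless z x}"

definition ThetaF :: "'w::wellorder set \<Rightarrow> ('w tm \<Rightarrow> 'w) \<Rightarrow> 'w tm \<Rightarrow> 'w" where
  "ThetaF X f x = (LEAST t. t \<in> X \<and> star x < t \<and>
       (\<forall>z. nf z \<and> tless z x \<and> star z < t \<longrightarrow> f z < t))"

definition Theta :: "'w::wellorder set \<Rightarrow> 'w tm \<Rightarrow> 'w" where
  "Theta X = wfrec tlessR (ThetaF X)"

fun OmN :: "nat \<Rightarrow> 'w::wellorder tm" where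
  "OmN 0 = Plus Z w1 Z"
| "OmN (Suc n) = Plus (OmN n) w1 Z"

definition Theta_eps :: "'w::wellorder set \<Rightarrow> 'w" where
  "Theta_eps X = (LEAST t. \<forall>n. Theta X (OmN n) \<le> t)"

definition eps_hat :: "'w::wellorder set \<Rightarrow> 'w tm set" where
  "eps_hat X = {x. nf x \<and> star x < Theta_eps X}"

definition FIX :: "'w::wellorder set \<Rightarrow> 'w tm set" where
  "FIX X = {x. nf x \<and> star (fs x w1) < star x \<and> tau x = Some (star x) \<and>
                (\<exists>g. nf g \<and> tless x g \<and> Theta X g = star x)}"

end

theory Submission
  imports Defs
begin

lemma tless_irrefl: "\<not> tless x x"
  by (induction x) auto

lemma tless_trans: "tless x y \<Longrightarrow> tless y z \<Longrightarrow> tless x z"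
proof (induction x arbitrary: y z)
  case Z
  then show ?case by (cases y; cases z) auto
next
  case (Plus a b c)
  obtain a1 b1 c1 where y: "y = Plus a1 b1 c1" using Plus.prems by (cases y) auto
  obtain a2 b2 c2 where z: "z = Plus a2 b2 c2" using Plus.prems y by (cases z) auto
  have h1: "tless a a1 \<or> (a=a1 \<and> (b<b1 \<or> (b=b1 \<and> tless c c1)))" using Plus.prems y by simp
  have h2: "tless a1 a2 \<or> (a1=a2 \<and> (b1<b2 \<or> (b1=b2 \<and> tless c1 c2)))" using Plus.prems y z by simp
  show ?case using h1 h2 Plus.IH(1)[of a1 a2] Plus.IH(2)[of c1 c2] z
    by (auto dest: order.strict_trans)
qed

lemma tless_total: "x = y \<or> tless x y \<or> tless y x"
proof (induction x arbitrary: y)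
  case Z
  then show ?case by (cases y) auto
next
  case (Plus a b c)
  show ?case
  proof (cases y)
    case (Plus a1 b1 c1)
    then show ?thesis using Plus.IH(1)[of a1] Plus.IH(2)[of c1] less_linear[of b b1] by auto
  qed simp
qed

lemma acc_Z: "Z \<in> Wellfounded.acc tlessR"
  by (rule accI) (auto simp: tlessR_def elim: tless.elims)

lemma acc_Plus:
  assumes "a \<in> Wellfounded.acc tlessR"
  shows "\<forall>b c. nf (Plus a b c) \<longrightarrow> Plus a b c \<in> Wellfounded.acc tlessR"
  using assms
proof (induction a rule: acc_induct_rule)
  case (1 a)
  note IHa = this
  show ?case
  proof (rule allI)
    fix b
    show "\<forall>c. nf (Plus a b c) \<longrightarrow> Plus a b c \<in> Wellfounded.acc tlessR"
    proof (induction b rule: less_induct)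
      case (less b)
      note IHb = this
      show ?case
      proof (intro allI impI)
        fix c assume nfc: "nf (Plus a b c)"
        have cacc: "c \<in> Wellfounded.acc tlessR"
        proof (cases c)
          case Z then show ?thesis using acc_Z by simp
        next
          case (Plus a2 b2 c2)
          then have "(a2, a) \<in> tlessR" using nfc by (auto simp: tlessR_def)
          then show ?thesis using IHa Plus nfc by auto
        qed
        show "Plus a b c \<in> Wellfounded.acc tlessR"
          using cacc nfc
        proof (induction c rule: acc_induct_rule)
          case (1 c)
          show ?case
          proof (rule accI)
            fix y assume yr: "(y, Plus a b c) \<in> tlessR"
            show "y \<in> Wellfounded.acc tlessR"
            proof (cases y)
              case Z then show ?thesis using acc_Z by simp
            next
              case (Plus a' b' c')
              have nfy: "nf y" and lt: "tless y (Plus a b c)" using yr by (auto simp: tlessR_def)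
              consider "tless a' a" | "a' = a" "b' < b" | "a' = a" "b' = b" "tless c' c"
                using lt Plus by auto
              then show ?thesis
              proof cases
                case 1
                then have "(a', a) \<in> tlessR" using nfy Plus 1 \<open>nf (Plus a b c)\<close> by (auto simp: tlessR_def)
                then show ?thesis using IHa nfy Plus by auto
              next
                case 2
                then show ?thesis using IHb nfy Plus by auto
              next
                case 3
                have "(c', c) \<in> tlessR" using nfy Plus 3 \<open>nf (Plus a b c)\<close> by (auto simp: tlessR_def)
                moreover have "nf (Plus a b c')"
                proof -
                  have "case c' of Z \<Rightarrow> True | Plus a'' _ _ \<Rightarrow> tless a'' a"
                  proof (cases c')
                    case (Plus a'' b'' c'')
                    show ?thesis
                    proof (cases c)
                      case Z then show ?thesis using 3 Plus by simp
                    next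
                      case (Plus a3 b3 c3)
                      have "tless a3 a" using \<open>nf (Plus a b c)\<close> Plus by simp
                      moreover have "tless a'' a3 \<or> a'' = a3" using 3 Plus \<open>c' = Plus a'' b'' c''\<close> by auto
                      ultimately show ?thesis using \<open>c' = Plus a'' b'' c''\<close> tless_trans by auto
                    qed
                  qed simp
                  then show ?thesis using nfy Plus 3 by simp
                qed
                ultimately show ?thesis using 1 Plus 3 by auto
              qed
            qed
          qed
        qed
      qed
    qed
  qed
qed

lemma nf_acc: "nf x \<Longrightarrow> x \<in> Wellfounded.acc tlessR"
proof (induction x)
  case Z then show ?case using acc_Z by simp
next
  case (Plus a b c)
  then show ?case using acc_Plus[of a] by auto
qed

lemma wf_tlessR: "wf tlessR"
proof (rule acc_wfI, intro allI)
  fix x :: "'a::wellorder tm"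
  show "x \<in> Wellfounded.acc tlessR"
  proof (cases "nf x")
    case True then show ?thesis by (rule nf_acc)
  next
    case False
    show ?thesis
    proof (rule accI)
      fix y assume "(y, x) \<in> tlessR"
      then show "y \<in> Wellfounded.acc tlessR" using False by (simp add: tlessR_def)
    qed
  qed
qed


instance tm :: (countable) countable by countable_datatype

lemma w0_le: "w0 \<le> (x::'w::wellorder)"
  unfolding w0_def by (rule Least_le) simp

lemma Cset_finite: "finite (Cset x)"
  by (induction x) auto

lemma w0_Cset: "w0 \<in> Cset x"
  by (induction x) auto

lemma le_star: "y \<in> Cset x \<Longrightarrow> y \<le> star x"
  unfolding star_def using Cset_finite by (rule Max_ge)

lemma map_tm_inj: "Cset x \<subseteq> A \<Longrightarrow> Cset y \<subseteq> A \<Longrightarrow> inj_on f A \<Longrightarrow> map_tm f x = map_tm f y \<Longrightarrow> x = y"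
proof (induction x arbitrary: y)
  case Z then show ?case by (cases y) auto
next
  case (Plus a b c)
  then show ?case by (cases y) (auto simp: inj_on_eq_iff)
qed

lemma countable_terms:
  assumes "countable (A::'w::wellorder set)" shows "countable {x::'w tm. Cset x \<subseteq> A}"
proof -
  obtain f :: "'w \<Rightarrow> nat" where f: "inj_on f A" using assms by (rule countableE)
  have "inj_on (map_tm f) {x::'w tm. Cset x \<subseteq> A}"
    using map_tm_inj[OF _ _ f] by (auto simp: inj_on_def)
  moreover have "countable (map_tm f ` {x::'w tm. Cset x \<subseteq> A})"
    by (rule countable_subset[OF subset_UNIV]) simp
  ultimately show ?thesis using countable_image_inj_on by blast
qed

lemma bounded_countable:
  assumes unc: "\<not> countable (UNIV :: 'w::wellorder set)"
    and seg: "\<forall>x::'w. countable {y. y < x}" and B: "countable (B::'w set)"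
  shows "\<exists>u. \<forall>x\<in>B. x < u"
proof (rule ccontr)
  assume "\<not> ?thesis"
  then have "\<forall>u. \<exists>x\<in>B. u \<le> x" by (auto simp: not_less)
  then have "UNIV \<subseteq> (\<Union>x\<in>B. insert x {y. y<x})" by (auto simp: le_less)
  moreover have "countable (\<Union>x\<in>B. insert x {y. y<x})"
    using B seg by (intro countable_UN) auto
  ultimately show False using unc countable_subset by blast
qed

lemma theta_exists:
  fixes X :: "'w::wellorder set" and f :: "'w tm \<Rightarrow> 'w" and s :: 'w
  assumes unc: "\<not> countable (UNIV :: 'w set)"
    and seg: "\<forall>x::'w. countable {y. y < x}" and cl: "club X"
  shows "\<exists>t. t \<in> X \<and> s < t \<and> (\<forall>z. star z < t \<longrightarrow> f z < t)"
proof -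
  have step: "\<exists>t. t\<in>X \<and> u < t \<and> (\<forall>z. star z < u \<longrightarrow> f z < t)" for u
  proof -
    have "countable (insert u (f ` {z. Cset z \<subseteq> {y. y<u}}))"
      using countable_terms[OF seg[rule_format, of u]] by simp
    then obtain v where v: "\<forall>x\<in>insert u (f ` {z. Cset z \<subseteq> {y. y<u}}). x < v"
      using bounded_countable[OF unc seg] by blast
    obtain t where t: "t \<in> X" "v < t" using cl unfolding club_def by blast
    have "f z < t" if "star z < u" for z
    proof -
      have "Cset z \<subseteq> {y. y<u}" using that le_star by fastforce
      then show ?thesis using v t by force
    qed
    then show ?thesis using v t by force
  qed
  define nx where "nx u = (SOME t. t\<in>X \<and> u < t \<and> (\<forall>z. star z < u \<longrightarrow> f z < t))" for u
  have nx: "nx u \<in> X \<and> u < nx u \<and> (\<forall>z. star z < u \<longrightarrow> f z < nx u)" for u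
    unfolding nx_def using someI_ex[OF step[of u]] .
  define sq where "sq k = (nx ^^ k) s" for k
  have sqS: "sq (Suc k) = nx (sq k)" for k by (simp add: sq_def)
  have sm: "strict_mono sq"
    unfolding strict_mono_Suc_iff by (simp add: sqS nx)
  obtain u0 where "\<forall>x\<in>range sq. x < u0"
    using bounded_countable[OF unc seg, of "range sq"] by blast
  then have ex: "\<forall>k. sq k \<le> u0" by (simp add: less_imp_le)
  define t where "t = (LEAST u. \<forall>k. sq k \<le> u)"
  have tub: "\<forall>k. sq k \<le> t" unfolding t_def using LeastI[of "\<lambda>u. \<forall>k. sq k \<le> u", OF ex] .
  have below: "\<exists>k. g < sq k" if "g < t" for g
  proof (rule ccontr)
    assume "\<not> ?thesis"
    then have "\<forall>k. sq k \<le> g" by (auto simp: not_less)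
    then have "t \<le> g" unfolding t_def by (rule Least_le)
    then show False using that by simp
  qed
  have lt: "sq k < t" for k
    using sm tub by (metis lessI order.strict_trans2 strict_mono_def)
  have "t \<in> X"
  proof -
    have "t \<noteq> w0" using lt[of 0] w0_le[of "sq 0"] by auto
    moreover have "\<forall>g<t. \<exists>x\<in>X. g < x \<and> x < t"
    proof (intro allI impI)
      fix g assume "g < t"
      then obtain k where k: "g < sq k" using below by blast
      have "sq (Suc k) \<in> X" using nx sqS by simp
      moreover have "g < sq (Suc k)" using k sm by (meson lessI order.strict_trans strict_mono_def)
      ultimately show "\<exists>x\<in>X. g < x \<and> x < t" using lt by blast
    qed
    ultimately show ?thesis using cl unfolding club_def by blast
  qed
  moreover have "s < t" using lt[of 0] by (simp add: sq_def)
  moreover have "\<forall>z. star z < t \<longrightarrow> f z < t"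
  proof (intro allI impI)
    fix z assume "star z < t"
    then obtain k where "star z < sq k" using below by blast
    then have "f z < sq (Suc k)" using nx sqS by simp
    then show "f z < t" using lt by (meson order.strict_trans)
  qed
  ultimately show ?thesis by blast
qed

lemma Theta_eq:
  assumes "nf x"
  shows "Theta X x = (LEAST t. t \<in> X \<and> star x < t \<and>
       (\<forall>z. nf z \<and> tless z x \<and> star z < t \<longrightarrow> Theta X z < t))"
proof -
  have "Theta X x = ThetaF X (cut (Theta X) tlessR x) x"
    unfolding Theta_def by (rule wfrec[OF wf_tlessR])
  also have "\<dots> = (LEAST t. t \<in> X \<and> star x < t \<and>
       (\<forall>z. nf z \<and> tless z x \<and> star z < t \<longrightarrow> Theta X z < t))"
    unfolding ThetaF_def
    by (rule arg_cong[where f=Least], rule ext) (auto simp: cut_apply tlessR_def assms)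
  finally show ?thesis .
qed

lemma Theta_char:
  fixes X :: "'w::wellorder set"
  assumes unc: "\<not> countable (UNIV :: 'w set)"
    and seg: "\<forall>x::'w. countable {y. y < x}" and cl: "club X" and nfx: "nf x"
  shows "Theta X x \<in> X \<and> star x < Theta X x \<and>
       (\<forall>z. nf z \<and> tless z x \<and> star z < Theta X x \<longrightarrow> Theta X z < Theta X x)"
proof -
  obtain t where "t \<in> X \<and> star x < t \<and> (\<forall>z. star z < t \<longrightarrow> Theta X z < t)"
    using theta_exists[OF unc seg cl] by blast
  then have "\<exists>t. t \<in> X \<and> star x < t \<and>
       (\<forall>z. nf z \<and> tless z x \<and> star z < t \<longrightarrow> Theta X z < t)" by blast
  from LeastI_ex[OF this] show ?thesis unfolding Theta_eq[OF nfx, symmetric] .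
qed

lemma Theta_min:
  assumes "nf x" "t \<in> X" "star x < t" "\<forall>z. nf z \<and> tless z x \<and> star z < t \<longrightarrow> Theta X z < t"
  shows "Theta X x \<le> t"
  unfolding Theta_eq[OF assms(1)] by (rule Least_le) (use assms in blast)


lemma tless_Z[simp]: "\<not> tless x Z"
  by (cases x) auto

lemma addc_w0: "addc al w0 = al"
  by (induction al) (auto simp: mk_def)

lemma addc_nZ: "b \<noteq> w0 \<Longrightarrow> addc al b \<noteq> Z"
  by (induction al) (auto simp: mk_def)

lemma nf_addc: "nf al \<Longrightarrow> omega_mult al \<Longrightarrow> nf (addc (al::'w::wellorder tm) b)"
proof (induction al)
  case Z then show ?case by (auto simp: mk_def)
next
  case (Plus a b' c)
  show ?case
  proof (cases c)
    case Z
    then have "a \<noteq> Z" using Plus.prems by simp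
    then have "tless Z a" by (cases a) auto
    then show ?thesis using Plus.prems Z by (auto simp: mk_def)
  next
    case (Plus a2 b2 c2)
    have "nf (addc c b)" using Plus.IH(2) \<open>nf (Plus a b' c)\<close> \<open>omega_mult (Plus a b' c)\<close> Plus by simp
    moreover have "addc c b = Plus a2 b2 (addc c2 b)" using Plus by simp
    ultimately show ?thesis using \<open>nf (Plus a b' c)\<close> Plus by simp
  qed
qed

lemma tless_addc: "b1 < b2 \<Longrightarrow> tless (addc al b1) (addc (al::'w::wellorder tm) b2)"
proof (induction al)
  case Z
  have "b2 \<noteq> w0" using Z w0_le[of b1] by auto
  then show ?case using Z by (auto simp: mk_def)
qed simp

lemma Cset_addc: "Cset (addc al b) = insert b (Cset (al::'w::wellorder tm))"
  by (induction al) (auto simp: mk_def)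

lemma star_addc: "star (addc al b) = max (star (al::'w::wellorder tm)) b"
  unfolding star_def Cset_addc using Cset_finite w0_Cset
  by (subst Max_insert) (auto simp: max.commute)

lemma addc_split: "nf z \<Longrightarrow> tless z (addc al b) \<Longrightarrow> tless z al \<or> (\<exists>d<b. z = addc (al::'w::wellorder tm) d)"
proof (induction al arbitrary: z)
  case Z
  show ?case
  proof (cases "b = w0")
    case True then show ?thesis using Z by (auto simp: mk_def)
  next
    case False
    show ?thesis
    proof (cases z)
      case Z then show ?thesis using False w0_le[of b] by (auto simp: mk_def intro!: exI[of _ w0])
    next
      case (Plus a' b' c')
      have "a' = Z" "b' < b" using Z.prems Plus False by (auto simp: mk_def)
      moreover have "c' = Z" using Z.prems Plus \<open>a' = Z\<close> by (cases c') auto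
      ultimately show ?thesis using Z.prems Plus by (auto simp: mk_def)
    qed
  qed
next
  case (Plus a b' c)
  show ?case
  proof (cases z)
    case Z then show ?thesis by simp
  next
    case (Plus a2 b2 c2)
    consider "tless a2 a" | "a2 = a" "b2 < b'" | "a2 = a" "b2 = b'" "tless c2 (addc c b)"
      using Plus \<open>tless z (addc (Plus a b' c) b)\<close> by auto
    then show ?thesis
    proof cases
      case 3
      have "nf c2" using \<open>nf z\<close> Plus by simp
      then have "tless c2 c \<or> (\<exists>d<b. c2 = addc c d)" using "Plus.IH"(2) 3 by blast
      then show ?thesis using Plus 3 by auto
    qed (use Plus in auto)
  qed
qed

lemma wlim_nZ: "wlim b \<Longrightarrow> b \<noteq> w0"
  by (simp add: wlim_def)

lemma tau_addc: "wlim b \<Longrightarrow> tau (addc al b) = Some (b::'w::wellorder)"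
proof (induction al)
  case Z then show ?case using wlim_nZ[OF Z] by (simp add: mk_def)
next
  case (Plus a b' c) then show ?case using addc_nZ[OF wlim_nZ[OF Plus.prems], of c] by simp
qed

lemma fs_addc: "wlim b \<Longrightarrow> fs (addc al b) w1 = addc al (w1::'w::wellorder)"
proof (induction al)
  case Z then show ?case using wlim_nZ[OF Z] by (simp add: mk_def Let_def)
next
  case (Plus a b' c) then show ?case using addc_nZ[OF wlim_nZ[OF Plus.prems], of c] by (simp add: Let_def)
qed

lemma w01: "(\<exists>y::'w::wellorder. w0 < y) \<Longrightarrow> w0 < (w1::'w)"
  unfolding w1_def wsuc_def by (rule LeastI_ex)

lemma wsuc_gt: "(\<exists>z::'w::wellorder. y < z) \<Longrightarrow> y < wsuc y"
  unfolding wsuc_def by (rule LeastI_ex)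

lemma nf_OmN: "w0 < (w1::'w::wellorder) \<Longrightarrow> nf (OmN n :: 'w tm)"
  by (induction n) auto

lemma Cset_OmN: "Cset (OmN n :: 'w::wellorder tm) = {w0, w1}"
  by (induction n) auto

lemma star_OmN: "w0 < (w1::'w::wellorder) \<Longrightarrow> star (OmN n :: 'w tm) = w1"
  unfolding star_def Cset_OmN by simp


theorem lemma4p3:
  fixes X :: "'w::wellorder set" and al :: "'w tm" and be :: 'w and bs :: "nat \<Rightarrow> 'w"
  assumes "\<not> countable (UNIV :: 'w set)"
    and "\<forall>x::'w. countable {y. y < x}"
    and "club X" and "w0 \<notin> X"
    and "nf al" and "omega_mult al"
    and "addc al be \<in> eps_hat X"
    and "tlim (addc al be)"
    and "addc al be \<notin> FIX X"
    and "strict_mono bs"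
    and "\<forall>n. bs n \<le> be" and "\<forall>g. (\<forall>n. bs n \<le> g) \<longrightarrow> be \<le> g"
  shows "strict_mono (\<lambda>n. Theta X (addc al (bs n)))
       \<and> (\<forall>n. Theta X (addc al (bs n)) \<le> Theta X (addc al be))
       \<and> (\<forall>g. (\<forall>n. Theta X (addc al (bs n)) \<le> g) \<longrightarrow> Theta X (addc al be) \<le> g)"
proof -
  define xi where "xi n = addc al (bs n)" for n
  define T where "T n = Theta X (xi n)" for n
  define x where "x = addc al be"
  have nfa: "nf (addc al b)" for b using nf_addc assms(5,6) by blast
  have nfx: "nf x" unfolding x_def by (rule nfa)
  have nfxi: "nf (xi n)" for n unfolding xi_def by (rule nfa)
  have char: "Theta X y \<in> X \<and> star y < Theta X y \<and>
       (\<forall>z. nf z \<and> tless z y \<and> star z < Theta X y \<longrightarrow> Theta X z < Theta X y)" if "nf y" for y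
    using Theta_char[OF assms(1-3) that] .
  have close: "Theta X z < Theta X y" if "nf y" "nf z" "tless z y" "star z < Theta X y" for y z
    using char[OF that(1)] that by blast
  have bsS: "bs n < bs (Suc n)" for n using assms(10) by (simp add: strict_mono_Suc_iff)
  have bslt: "bs n < be" for n using bsS[of n] assms(11) by (meson order.strict_trans2)
  have Tmono: "strict_mono T"
  proof (rule strict_monoI)
    fix n m :: nat assume "n < m"
    then have "bs n < bs m" using assms(10) by (simp add: strict_mono_less)
    then have "tless (xi n) (xi m)" "star (xi n) \<le> star (xi m)"
      unfolding xi_def star_addc by (auto intro: tless_addc simp: le_max_iff_disj)
    then show "T n < T m" unfolding T_def
      using close[OF nfxi nfxi] char[OF nfxi] by (meson order.strict_trans1)
  qed
  have Tlt: "T n < Theta X x" for n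
  proof -
    have "tless (xi n) x" "star (xi n) \<le> star x"
      unfolding xi_def x_def star_addc using bslt[of n] by (auto intro: tless_addc simp: le_max_iff_disj)
    then show ?thesis unfolding T_def
      using close[OF nfx nfxi] char[OF nfx] by (meson order.strict_trans1)
  qed
  have w0bs: "w0 < bs 1" using w0_le[of "bs 0"] bsS[of 0] by simp
  have part3: "Theta X x \<le> g" if g: "\<forall>n. T n \<le> g" for g
  proof -
    define s where "s = (LEAST u. \<forall>n. T n \<le> u)"
    have sub: "\<forall>n. T n \<le> s" unfolding s_def by (rule LeastI[of _ g]) (rule g)
    have sg: "s \<le> g" unfolding s_def by (rule Least_le) (rule g)
    have below: "\<exists>n. u < T n" if "u < s" for u
    proof (rule ccontr)
      assume "\<not> ?thesis"
      then have "\<forall>n. T n \<le> u" by (auto simp: not_less)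
      then have "s \<le> u" unfolding s_def by (rule Least_le)
      then show False using that by simp
    qed
    have Tlts: "T n < s" for n using Tmono sub
      by (metis lessI order.strict_trans2 strict_mono_def)
    have sX: "s \<in> X"
    proof -
      have "s \<noteq> w0" using Tlts[of 0] w0_le[of "T 0"] by auto
      moreover have "\<forall>h<s. \<exists>y\<in>X. h < y \<and> y < s"
      proof (intro allI impI)
        fix h assume "h < s"
        then obtain k where "h < T k" using below by blast
        moreover have "T k \<in> X" using char[OF nfxi] T_def by simp
        ultimately show "\<exists>y\<in>X. h < y \<and> y < s" using Tlts by blast
      qed
      ultimately show ?thesis using assms(3) unfolding club_def by blast
    qed
    have CL: "\<forall>z. nf z \<and> tless z x \<and> star z < s \<longrightarrow> Theta X z < s"
    proof (intro allI impI)
      fix z assume z: "nf z \<and> tless z x \<and> star z < s"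
      have "\<exists>m. tless z (xi m)"
      proof -
        have "tless z al \<or> (\<exists>d<be. z = addc al d)"
          using addc_split z unfolding x_def by blast
        then show ?thesis
        proof
          assume "tless z al"
          moreover have "tless al (xi 1)"
            using tless_addc[OF w0bs, of al] addc_w0[of al] unfolding xi_def by simp
          ultimately show ?thesis using tless_trans by blast
        next
          assume "\<exists>d<be. z = addc al d"
          then obtain d where d: "d < be" "z = addc al d" by blast
          have "\<exists>m. d < bs m"
          proof (rule ccontr)
            assume "\<not> ?thesis"
            then have "\<forall>n. bs n \<le> d" by (auto simp: not_less)
            then have "be \<le> d" using assms(12) by blast
            then show False using d by simp
          qed
          then show ?thesis using d tless_addc unfolding xi_def by blast
        qed
      qed
      then obtain m where m: "tless z (xi m)" by blast
      obtain k where k: "star z < T k" using below z by blast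
      define j where "j = max m k"
      have "tless z (xi j)"
      proof (cases "m = j")
        case True then show ?thesis using m by simp
      next
        case False
        then have "bs m < bs j" using assms(10) unfolding j_def
          by (simp add: strict_mono_less)
        then show ?thesis using m tless_trans tless_addc unfolding xi_def by blast
      qed
      moreover have "star z < T j"
        using k Tmono unfolding j_def by (metis max.cobounded2 order.strict_trans2 strict_mono_less_eq)
      ultimately have "Theta X z < T j" using close[OF nfxi] z unfolding T_def by blast
      then show "Theta X z < s" using Tlts by (meson order.strict_trans)
    qed
    have staral: "star al < s"
    proof -
      have "star al \<le> star (xi 0)" unfolding xi_def star_addc by simp
      also have "\<dots> < T 0" using char[OF nfxi] T_def by simp
      also have "\<dots> < s" by (rule Tlts)
      finally show ?thesis .
    qed
    have bes: "be < s"
    proof (rule ccontr)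
      assume "\<not> be < s"
      then have "s \<le> be" by simp
      moreover have "be \<le> s"
      proof -
        have "bs n \<le> s" for n
        proof -
          have "bs n \<le> star (xi n)" unfolding xi_def star_addc by simp
          also have "\<dots> < T n" using char[OF nfxi] T_def by simp
          also have "\<dots> < s" by (rule Tlts)
          finally show ?thesis by simp
        qed
        then show ?thesis using assms(12) by blast
      qed
      ultimately have sbe: "s = be" by simp
      have ex_gt: "\<exists>z. y < z" for y :: 'w using assms(3) unfolding club_def by blast
      have "be \<noteq> w0" using w0bs bslt[of 1] by auto
      moreover have "\<not> wis_succ be"
      proof
        assume "wis_succ be"
        then obtain y where y: "be = wsuc y" unfolding wis_succ_def by blast
        then have "y < be" using wsuc_gt[OF ex_gt[of y]] by simp
        then obtain n where "y < bs n"
          using assms(12) by (meson not_less)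
        then have "wsuc y \<le> bs n" unfolding wsuc_def by (rule Least_le)
        then show False using y bslt[of n] by simp
      qed
      ultimately have lim: "wlim be" unfolding wlim_def by simp
      have w01': "w0 < (w1::'w)" using w01 ex_gt by blast
      have starx: "star x = be" unfolding x_def star_addc using staral sbe by simp
      have w1be: "w1 < be"
      proof -
        have "w1 \<le> be" unfolding w1_def wsuc_def
          by (rule Least_le) (use \<open>be \<noteq> w0\<close> w0_le[of be] in auto)
        moreover have "w1 \<noteq> be" using \<open>\<not> wis_succ be\<close> unfolding w1_def wis_succ_def by blast
        ultimately show ?thesis by simp
      qed
      have fsx: "star (fs x w1) < star x"
        unfolding x_def fs_addc[OF lim] starx[unfolded x_def] star_addc
        using staral sbe w1be by simp
      have taux: "tau x = Some (star x)" unfolding starx unfolding x_def by (rule tau_addc[OF lim])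
      obtain n where n: "be < Theta X (OmN n)"
      proof (rule ccontr)
        assume "\<not> thesis"
        then have "\<forall>n. Theta X (OmN n) \<le> be" using that by (meson not_le)
        then have "Theta_eps X \<le> be" unfolding Theta_eps_def by (rule Least_le)
        moreover have "star x < Theta_eps X" using assms(7) unfolding eps_hat_def x_def by simp
        ultimately show False using starx by simp
      qed
      define Om where "Om = (OmN n :: 'w tm)"
      have nfOm: "nf Om" unfolding Om_def by (rule nf_OmN[OF w01'])
      have starOm: "star Om = w1" unfolding Om_def by (rule star_OmN[OF w01'])
      have "tless x Om"
      proof -
        have "Om \<noteq> x" using starOm starx w1be by auto
        moreover have "\<not> tless Om x"
        proof
          assume "tless Om x"
          then have "Theta X Om < s" using CL nfOm starOm w1be sbe by simp
          then show False using n sbe Om_def by simp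
        qed
        ultimately show ?thesis using tless_total by blast
      qed
      define S where "S = {y. nf y \<and> tless x y \<and> star y < be \<and> be \<le> Theta X y}"
      have "Om \<in> S" unfolding S_def using nfOm \<open>tless x Om\<close> starOm w1be n Om_def by simp
      then obtain ga where ga: "ga \<in> S" and gamin: "\<And>y. (y, ga) \<in> tlessR \<Longrightarrow> y \<notin> S"
        using wfE_min[OF wf_tlessR] by metis
      have "Theta X ga \<le> be"
      proof (rule Theta_min)
        show "nf ga" using ga S_def by simp
        show "be \<in> X" using sX sbe by simp
        show "star ga < be" using ga S_def by simp
        show "\<forall>z. nf z \<and> tless z ga \<and> star z < be \<longrightarrow> Theta X z < be"
        proof (intro allI impI)
          fix z assume z: "nf z \<and> tless z ga \<and> star z < be"
          consider "tless z x" | "z = x" | "tless x z" using tless_total by blast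
          then show "Theta X z < be"
          proof cases
            case 1 then show ?thesis using CL z sbe by simp
          next
            case 2 then show ?thesis using z starx by simp
          next
            case 3
            have "(z, ga) \<in> tlessR" using z ga S_def by (simp add: tlessR_def)
            then have "z \<notin> S" by (rule gamin)
            then show ?thesis using z 3 S_def by (auto simp: not_le)
          qed
        qed
      qed
      then have "Theta X ga = star x" using ga S_def starx by simp
      moreover have "nf ga \<and> tless x ga" using ga S_def by simp
      ultimately have "x \<in> FIX X" unfolding FIX_def using nfx fsx taux by blast
      then show False using assms(9) x_def by simp
    qed
    have starxs: "star x < s" unfolding x_def star_addc using staral bes by simp
    have "Theta X x \<le> s" by (rule Theta_min[OF nfx sX starxs CL])
    then show ?thesis using sg by simp
  qed
  show ?thesis
    using Tmono Tlt part3 unfolding T_def xi_def x_def by (auto intro: less_imp_le)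
qed

end
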